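(* Let $\Delta\ge 4$ and let $T$ be a tree of order $n$ with maximum degree $\Delta$. For $1\le i\le\Delta$ let $n_i$ be the number of vertices of $T$ of degree $i$, and for $1\le p\le q\le \Delta$ let $m_{p,q}$ be the number of edges of $T$ joining a vertex of degree $p$ to a vertex of degree $q$. Put $t=\left\lfloor\frac{\Delta+3}{2}\right\rfloor$ and $E_{\le t}=\sum_{1\le p\le q\le t} m_{p,q}$. Assume that $\Delta$ divides $n$, that $n_{i'}=0$ for all integers $i'$ with $t<i'<\Delta$, and that $m_{\Delta,\Delta}=0$. Then $E_{\le t}\ge \Delta-1$. *)

theory Defs
  imports Main
begin

definition simple_graph :: "'a set \<Rightarrow> 'a set set \<Rightarrow> bool" where
  "simple_graph V E \<longleftrightarrow> finite V \<and> (\<forall>e\<in>E. e \<subseteq> V \<and> card e = 2)"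

definition adj :: "'a set set \<Rightarrow> 'a \<Rightarrow> 'a \<Rightarrow> bool" where
  "adj E u v \<longleftrightarrow> {u, v} \<in> E"

definition connected_graph :: "'a set \<Rightarrow> 'a set set \<Rightarrow> bool" where
  "connected_graph V E \<longleftrightarrow> (\<forall>u\<in>V. \<forall>v\<in>V. (adj E)\<^sup>*\<^sup>* u v)"

definition has_cycle :: "'a set \<Rightarrow> 'a set set \<Rightarrow> bool" where
  "has_cycle V E \<longleftrightarrow> (\<exists>cs. length cs \<ge> 3 \<and> distinct cs \<and> set cs \<subseteq> V \<and>
      (\<forall>i < length cs. {cs ! i, cs ! ((i + 1) mod length cs)} \<in> E))"

definition is_tree :: "'a set \<Rightarrow> 'a set set \<Rightarrow> bool" where
  "is_tree V E \<longleftrightarrow> simple_graph V E \<and> V \<noteq> {} \<and> connected_graph V E \<and> \<not> has_cycle V E"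

definition degree :: "'a set set \<Rightarrow> 'a \<Rightarrow> nat" where
  "degree E v = card {e \<in> E. v \<in> e}"

definition max_degree :: "'a set \<Rightarrow> 'a set set \<Rightarrow> nat" where
  "max_degree V E = Max (degree E ` V)"

definition num_deg :: "'a set \<Rightarrow> 'a set set \<Rightarrow> nat \<Rightarrow> nat" where
  "num_deg V E i = card {v \<in> V. degree E v = i}"

definition num_edges_deg :: "'a set set \<Rightarrow> nat \<Rightarrow> nat \<Rightarrow> nat" where
  "num_edges_deg E p q =
     card {e \<in> E. \<exists>u v. e = {u, v} \<and> degree E u = p \<and> degree E v = q}"

end

theory Submission
  imports Defs
begin

lemma sg_finite_E: "simple_graph V E \<Longrightarrow> finite E"
  unfolding simple_graph_def by (meson PowI finite_Pow_iff finite_subset subsetI)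

lemma conn_lower:
  assumes sg: "simple_graph V E" and cg: "connected_graph V E" and r: "r \<in> V"
  shows "card V \<le> card E + 1"
proof -
  have fV: "finite V" using sg simple_graph_def by auto
  have fE: "finite E" using sg sg_finite_E by auto
  define d where "d v = (LEAST k. (adj E ^^ k) r v)" for v
  have ex: "\<exists>k. (adj E ^^ k) r v" if "v \<in> V" for v
  proof -
    have "(adj E)\<^sup>*\<^sup>* r v" using cg r that unfolding connected_graph_def by blast
    then show ?thesis by (rule rtranclp_imp_relpowp)
  qed
  have dI: "(adj E ^^ d v) r v" if "v \<in> V" for v
    unfolding d_def using ex[OF that] by (rule LeastI_ex)
  have dle: "d w \<le> k" if "(adj E ^^ k) r w" for w k
    unfolding d_def using that by (rule Least_le)
  define p where "p v = (SOME w. (adj E ^^ (d v - 1)) r w \<and> adj E w v)" for v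
  have pp: "(adj E ^^ (d v - 1)) r (p v) \<and> adj E (p v) v \<and> d (p v) < d v"
    if "v \<in> V" "v \<noteq> r" for v
  proof -
    have "d v \<noteq> 0"
    proof
      assume "d v = 0"
      then have "(adj E ^^ 0) r v" using dI[OF that(1)] by simp
      then show False using that(2) by simp
    qed
    then obtain m where m: "d v = Suc m" by (cases "d v") auto
    then have "(adj E ^^ Suc m) r v" using dI[OF that(1)] by simp
    then obtain w where "(adj E ^^ m) r w" "adj E w v" by (rule relpowp_Suc_E)
    then have "\<exists>w. (adj E ^^ (d v - 1)) r w \<and> adj E w v" using m by auto
    then have h: "(adj E ^^ (d v - 1)) r (p v) \<and> adj E (p v) v"
      unfolding p_def by (rule someI_ex)
    then have "d (p v) \<le> d v - 1" using dle by blast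
    with h m show ?thesis by auto
  qed
  define f where "f v = {p v, v}" for v
  have "inj_on f (V - {r})"
  proof (rule inj_onI)
    fix v w assume v: "v \<in> V - {r}" and w: "w \<in> V - {r}" and eq: "f v = f w"
    show "v = w"
    proof (rule ccontr)
      assume "v \<noteq> w"
      with eq have vw: "v = p w" "w = p v" unfolding f_def doubleton_eq_iff by blast+
      have "d (p v) < d v" using pp[of v] v by blast
      moreover have "d (p w) < d w" using pp[of w] w by blast
      ultimately show False using vw by (metis less_asym)
    qed
  qed
  moreover have "f ` (V - {r}) \<subseteq> E"
  proof
    fix e assume "e \<in> f ` (V - {r})"
    then obtain v where v: "v \<in> V" "v \<noteq> r" "e = f v" by blast
    then have "adj E (p v) v" using pp[of v] by blast
    then show "e \<in> E" using v(3) unfolding f_def adj_def by simp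
  qed
  ultimately have "card (V - {r}) \<le> card E"
    using fE by (rule card_inj_on_le)
  moreover have "card (V - {r}) = card V - 1" using r fV by simp
  ultimately show ?thesis by linarith
qed

definition is_path :: "'a set \<Rightarrow> 'a set set \<Rightarrow> 'a list \<Rightarrow> bool" where
  "is_path V E xs \<longleftrightarrow> distinct xs \<and> set xs \<subseteq> V \<and> length xs \<ge> 2 \<and>
     (\<forall>i. Suc i < length xs \<longrightarrow> {xs!i, xs!Suc i} \<in> E)"

lemma edge_other:
  assumes "simple_graph V E" "e \<in> E" "x \<in> e"
  shows "\<exists>y. e = {x,y} \<and> y \<noteq> x \<and> y \<in> V"
proof -
  have "e \<subseteq> V" "card e = 2" using assms unfolding simple_graph_def by auto
  then obtain a b where ab: "e = {a,b}" "a \<noteq> b" by (auto simp: card_2_iff)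
  show ?thesis
  proof (cases "x = a")
    case True
    then show ?thesis using ab \<open>e \<subseteq> V\<close> by auto
  next
    case False
    then have "x = b" using ab assms(3) by auto
    then have "e = {x, a} \<and> a \<noteq> x \<and> a \<in> V" using ab \<open>e \<subseteq> V\<close> by auto
    then show ?thesis by blast
  qed
qed

lemma leaf_exists:
  assumes sg: "simple_graph V E" and nc: "\<not> has_cycle V E" and ne: "E \<noteq> {}"
  shows "\<exists>x\<in>V. \<exists>e. {e'\<in>E. x \<in> e'} = {e}"
proof -
  have fV: "finite V" using sg simple_graph_def by auto
  obtain e where e: "e \<in> E" using ne by auto
  have "card e = 2" "e \<subseteq> V" using sg e unfolding simple_graph_def by auto
  then obtain a b where ab: "e = {a,b}" "a \<noteq> b" "a \<in> V" "b \<in> V"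
    by (auto simp: card_2_iff)
  have p0: "is_path V E [a,b]" using ab e unfolding is_path_def
    by (auto simp: less_Suc_eq)
  have bnd: "\<forall>ys. is_path V E ys \<longrightarrow> length ys < card V + 1"
  proof (intro allI impI)
    fix ys assume "is_path V E ys"
    then have "distinct ys" "set ys \<subseteq> V" by (auto simp: is_path_def)
    then have "length ys = card (set ys)" by (simp add: distinct_card)
    also have "\<dots> \<le> card V" using fV \<open>set ys \<subseteq> V\<close> by (rule card_mono)
    finally show "length ys < card V + 1" by simp
  qed
  obtain xs where xs: "is_path V E xs" and mx: "\<And>ys. is_path V E ys \<Longrightarrow> length ys \<le> length xs"
    using ex_has_greatest_nat[of "is_path V E" "[a,b]" length "card V + 1", OF p0 bnd] by blast
  define L where "L = length xs"
  have L2: "L \<ge> 2" using xs unfolding is_path_def L_def by auto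
  have dx: "distinct xs" and sV: "set xs \<subseteq> V"
    and pe: "\<And>i. Suc i < L \<Longrightarrow> {xs!i, xs!Suc i} \<in> E"
    using xs unfolding is_path_def L_def by auto
  define x where "x = xs ! (L - 1)"
  define y0 where "y0 = xs ! (L - 2)"
  have xV: "x \<in> V" using sV L2 unfolding x_def L_def by auto
  have e0: "{y0, x} \<in> E"
  proof -
    have "Suc (L - 2) < L" using L2 by simp
    then have "{xs!(L-2), xs!Suc (L-2)} \<in> E" by (rule pe)
    moreover have "Suc (L - 2) = L - 1" using L2 by simp
    ultimately show ?thesis unfolding x_def y0_def by simp
  qed
  have "{e'\<in>E. x \<in> e'} = {{y0, x}}"
  proof (intro equalityI subsetI)
    fix e' assume "e' \<in> {e'\<in>E. x \<in> e'}"
    then have e': "e' \<in> E" "x \<in> e'" by auto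
    then obtain y where y: "e' = {x, y}" "y \<noteq> x" "y \<in> V"
      using edge_other[OF sg] by blast
    show "e' \<in> {{y0, x}}"
    proof (cases "y \<in> set xs")
      case False
      have "is_path V E (xs @ [y])"
        unfolding is_path_def
      proof (intro conjI allI impI)
        show "distinct (xs @ [y])" using dx False by auto
        show "set (xs @ [y]) \<subseteq> V" using sV y by auto
        show "2 \<le> length (xs @ [y])" using L2 L_def by auto
        fix i assume i: "Suc i < length (xs @ [y])"
        show "{(xs @ [y]) ! i, (xs @ [y]) ! Suc i} \<in> E"
        proof (cases "Suc i < L")
          case True
          then have "(xs @ [y]) ! i = xs ! i" "(xs @ [y]) ! Suc i = xs ! Suc i"
            unfolding L_def by (auto simp: nth_append)
          then show ?thesis using pe[OF True] by simp
        next
          case False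
          then have il: "i = L - 1" using i L_def by auto
          have il2: "i < length xs" using il L2 unfolding L_def by simp
          have h1: "(xs @ [y]) ! i = xs ! i" using il2 by (simp add: nth_append)
          have h2: "Suc i = length xs" using il L2 unfolding L_def by simp
          have h3: "(xs @ [y]) ! Suc i = y" unfolding h2 by simp
          have "xs ! i = x" using il x_def by simp
          then show ?thesis using h1 h3 e' y by simp
        qed
      qed
      then have "length (xs @ [y]) \<le> length xs" by (rule mx)
      then show ?thesis by simp
    next
      case True
      then obtain j where j: "j < L" "xs ! j = y" using L_def by (auto simp: in_set_conv_nth)
      have "j \<noteq> L - 1" using j y x_def by auto
      moreover have "j \<noteq> L - 2 \<Longrightarrow> False"
      proof -
        assume "j \<noteq> L - 2"
        with j \<open>j \<noteq> L - 1\<close> have jl: "j + 3 \<le> L" by auto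
        define cs where "cs = drop j xs"
        have lc: "length cs = L - j" using cs_def L_def by auto
        have csn: "cs ! k = xs ! (j + k)" if "k < length cs" for k
          using that lc jl unfolding cs_def L_def by simp
        have "has_cycle V E"
          unfolding has_cycle_def
        proof (intro exI conjI allI impI)
          show "3 \<le> length cs" using lc jl by auto
          show "distinct cs" using dx cs_def by auto
          show "set cs \<subseteq> V" using sV cs_def by (meson set_drop_subset subset_trans)
          fix i assume i: "i < length cs"
          show "{cs ! i, cs ! ((i + 1) mod length cs)} \<in> E"
          proof (cases "i + 1 < length cs")
            case True
            then have "(i + 1) mod length cs = i + 1" by simp
            moreover have "cs ! i = xs ! (j + i)" using i csn by blast
            moreover have "cs ! (i + 1) = xs ! Suc (j + i)" using True csn by simp
            moreover have "Suc (j + i) < L" using True lc by simp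
            ultimately show ?thesis using pe by simp
          next
            case False
            then have ii: "i + 1 = length cs" using i by auto
            have "j + i = L - 1" using ii lc jl by simp
            then have "cs ! i = xs ! (L - 1)" using csn i by metis
            moreover have "cs ! ((i + 1) mod length cs) = xs ! j" using ii csn lc jl by simp
            ultimately have "cs ! i = x" "cs ! ((i + 1) mod length cs) = y"
              using j x_def by auto
            then show ?thesis using e' y by simp
          qed
        qed
        with nc show False by auto
      qed
      ultimately have "j = L - 2" by blast
      then show ?thesis using j y y0_def by (auto simp: insert_commute)
    qed
  next
    fix e' assume "e' \<in> {{y0, x}}"
    then show "e' \<in> {e'\<in>E. x \<in> e'}" using e0 by auto
  qed
  then show ?thesis using xV by blast
qed

lemma acyc_upper:
  "simple_graph V E \<Longrightarrow> \<not> has_cycle V E \<Longrightarrow> V \<noteq> {} \<Longrightarrow> card E < card V"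
proof (induction "card E" arbitrary: V E rule: less_induct)
  case less
  have fV: "finite V" using less.prems simple_graph_def by auto
  have fE: "finite E" using less.prems sg_finite_E by auto
  show ?case
  proof (cases "E = {}")
    case True
    then show ?thesis using fV less.prems by (simp add: card_gt_0_iff)
  next
    case False
    obtain x e where x: "x \<in> V" and xe: "{e'\<in>E. x \<in> e'} = {e}"
      using leaf_exists[OF less.prems(1,2) False] by blast
    have eE: "e \<in> E" "x \<in> e" using xe by auto
    then obtain y where y: "e = {x,y}" "y \<noteq> x" "y \<in> V"
      using less.prems(1) unfolding simple_graph_def card_2_iff
      by (metis insert_commute insert_iff insert_subset singletonD)
    let ?V = "V - {x}" and ?E = "E - {e}"
    have sg': "simple_graph ?V ?E"
      using less.prems(1) xe unfolding simple_graph_def by blast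
    have nc': "\<not> has_cycle ?V ?E"
      using less.prems(2) unfolding has_cycle_def by blast
    have "card ?E < card E" using eE fE by (meson card_Diff1_less)
    then have "card ?E < card ?V" using less.hyps sg' nc' y by blast
    then show ?thesis using eE fE fV x by (simp add: card_Diff_singleton)
  qed
qed

theorem lemma4p4:
  fixes V :: "'a set" and E :: "'a set set" and \<Delta> n t :: nat
  assumes "is_tree V E"
    and "card V = n"
    and "max_degree V E = \<Delta>"
    and "\<Delta> \<ge> 4"
    and "t = (\<Delta> + 3) div 2"
    and "\<Delta> dvd n"
    and "\<And>i'. t < i' \<Longrightarrow> i' < \<Delta> \<Longrightarrow> num_deg V E i' = 0"
    and "num_edges_deg E \<Delta> \<Delta> = 0"
  shows "(\<Sum>p\<in>{1..t}. \<Sum>q\<in>{p..t}. num_edges_deg E p q) \<ge> \<Delta> - 1"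
proof -
  have sg: "simple_graph V E" and cg: "connected_graph V E" and nc: "\<not> has_cycle V E"
    and Vne: "V \<noteq> {}" using assms(1) unfolding is_tree_def by auto
  have fV: "finite V" using sg simple_graph_def by auto
  have fE: "finite E" using sg sg_finite_E by auto
  obtain r where r: "r \<in> V" using Vne by auto
  have cardE: "card E + 1 = n"
    using conn_lower[OF sg cg r] acyc_upper[OF sg nc Vne] assms(2) by linarith
  have degle: "degree E v \<le> \<Delta>" if "v \<in> V" for v
    using assms(3) fV that unfolding max_degree_def by auto
  define F where "F v = {e\<in>E. v \<in> e}" for v
  have fF: "finite (F v)" for v using fE F_def by auto
  define D where "D = {v\<in>V. degree E v = \<Delta>}"
  have fD: "finite D" using fV D_def by auto
  have cF: "card (F v) = \<Delta>" if "v \<in> D" for v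
    using that unfolding D_def F_def degree_def by auto
  have emp: "{e \<in> E. \<exists>u v. e = {u, v} \<and> degree E u = \<Delta> \<and> degree E v = \<Delta>} = {}"
    using assms(8) fE unfolding num_edges_deg_def by (simp add: card_eq_0_iff)
  have disj: "F v \<inter> F w = {}" if "v \<in> D" "w \<in> D" "v \<noteq> w" for v w
  proof (rule ccontr)
    assume "F v \<inter> F w \<noteq> {}"
    then obtain e where e: "e \<in> E" "v \<in> e" "w \<in> e" unfolding F_def by auto
    then have "card e = 2" using sg simple_graph_def by auto
    then have "e = {v, w}" using e that(3) unfolding card_2_iff by auto
    moreover have "degree E v = \<Delta>" "degree E w = \<Delta>" using that unfolding D_def by auto
    ultimately have "e \<in> {e \<in> E. \<exists>u v. e = {u, v} \<and> degree E u = \<Delta> \<and> degree E v = \<Delta>}"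
      using e(1) by blast
    then show False using emp by simp
  qed
  have cU: "card (\<Union>v\<in>D. F v) = card D * \<Delta>"
    using card_UN_disjoint[OF fD, of F] fF disj cF by simp
  have sub: "(\<Union>v\<in>D. F v) \<subseteq> E" unfolding F_def by auto
  have kle: "card D * \<Delta> \<le> card E"
    using cU card_mono[OF fE sub] by simp
  define G where "G = E - (\<Union>v\<in>D. F v)"
  have cG: "card G = card E - card D * \<Delta>"
    using G_def card_Diff_subset[OF finite_subset[OF sub fE] sub] cU by simp
  define S where "S p q = {e \<in> E. \<exists>u v. e = {u, v} \<and> degree E u = p \<and> degree E v = q}" for p q
  have degrange: "1 \<le> degree E u \<and> degree E u \<le> t" if "e \<in> G" "u \<in> e" for e u
  proof -
    have eE: "e \<in> E" using that G_def by auto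
    then have uV: "u \<in> V" using sg that(2) unfolding simple_graph_def by blast
    have "e \<in> F u" using eE that(2) F_def by auto
    then have "u \<notin> D" using that(1) G_def by auto
    then have ne: "degree E u \<noteq> \<Delta>" using uV D_def by auto
    have "F u \<noteq> {}" using \<open>e \<in> F u\<close> by auto
    then have g1: "1 \<le> degree E u" using fF[of u] unfolding degree_def F_def
      by (simp add: Suc_le_eq card_gt_0_iff)
    have "degree E u \<le> t"
    proof (rule ccontr)
      assume "\<not> degree E u \<le> t"
      then have "num_deg V E (degree E u) = 0" using assms(7) ne degle[OF uV] by auto
      then have "{v\<in>V. degree E v = degree E u} = {}" using fV unfolding num_deg_def by simp
      then show False using uV by auto
    qed
    then show ?thesis using g1 by auto
  qed
  have Gsub: "G \<subseteq> (\<Union>p\<in>{1..t}. \<Union>q\<in>{p..t}. S p q)"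
  proof
    fix e assume eG: "e \<in> G"
    then have eE: "e \<in> E" using G_def by auto
    then have "card e = 2" using sg unfolding simple_graph_def by blast
    then obtain u v where uv: "e = {u,v}" unfolding card_2_iff by blast
    have "u \<in> e" "v \<in> e" using uv by auto
    then have du: "1 \<le> degree E u \<and> degree E u \<le> t"
      and dv: "1 \<le> degree E v \<and> degree E v \<le> t" using degrange eG by blast+
    show "e \<in> (\<Union>p\<in>{1..t}. \<Union>q\<in>{p..t}. S p q)"
    proof (cases "degree E u \<le> degree E v")
      case True
      have "e \<in> S (degree E u) (degree E v)" unfolding S_def using eE uv by blast
      moreover have "degree E u \<in> {1..t}" "degree E v \<in> {degree E u..t}" using du dv True by auto
      ultimately show ?thesis by blast
    next
      case False
      have "e = {v, u}" using uv by blast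
      then have "e \<in> S (degree E v) (degree E u)" unfolding S_def using eE by blast
      moreover have "degree E v \<in> {1..t}" "degree E u \<in> {degree E v..t}" using du dv False by auto
      ultimately show ?thesis by blast
    qed
  qed
  have fS: "finite (S p q)" for p q using fE S_def by auto
  have "card G \<le> card (\<Union>p\<in>{1..t}. \<Union>q\<in>{p..t}. S p q)"
    by (rule card_mono) (use fS Gsub in auto)
  also have "\<dots> \<le> (\<Sum>p\<in>{1..t}. card (\<Union>q\<in>{p..t}. S p q))" by (rule card_UN_le) auto
  also have "\<dots> \<le> (\<Sum>p\<in>{1..t}. \<Sum>q\<in>{p..t}. card (S p q))"
    by (rule sum_mono) (rule card_UN_le, auto)
  also have "\<dots> = (\<Sum>p\<in>{1..t}. \<Sum>q\<in>{p..t}. num_edges_deg E p q)"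
    unfolding S_def num_edges_deg_def by simp
  finally have main: "card G \<le> (\<Sum>p\<in>{1..t}. \<Sum>q\<in>{p..t}. num_edges_deg E p q)" .
  obtain m where m: "n = \<Delta> * m" using assms(6) by auto
  have "card D * \<Delta> < n" using kle cardE by linarith
  then have "\<Delta> * card D < \<Delta> * m" using m by (simp add: mult.commute)
  then have "card D < m" by simp
  then have "\<Delta> * (card D + 1) \<le> \<Delta> * m" by (intro mult_le_mono2) simp
  moreover have "\<Delta> * (card D + 1) = card D * \<Delta> + \<Delta>" by (simp add: algebra_simps)
  ultimately have "\<Delta> - 1 \<le> card G" using cG cardE m by linarith
  with main show ?thesis by linarith
qed

end
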